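(* Let $\mathcal{C}=\mathsf{CSS}(A,B)$ be a qudit CSS code on $n$ qudits with distance at least $3$, and $H_A$ a parity-check matrix for $A$. Then any permutation automorphism $\tau$ of $\mathcal{C}$ such that $H_AP_\tau=H_A$, where $P_\tau$ is the permutation matrix of $\tau$, acts as a logical identity on $\mathcal{C}$.
   Context: Let $q$ be a prime power. For classical codes $A,B\subseteq\mathbb{F}_q^n$ with full-row-rank parity-check matrices $H_A,H_B$ satisfying $H_AH_B^T=0$, $\mathsf{CSS}(A,B)$ is the qudit stabilizer code with $X$-type stabilizers $X^v$ ($v$ in the row space of $H_A$) and $Z$-type stabilizers $Z^w$ ($w$ in the row space of $H_B$). A permutation $\tau\in S_n$ is a permutation automorphism of a classical code with parity-check matrix $H$ (of $r$ rows) if $UH=HP_\tau$ for some $U\in\mathrm{GL}_r(\mathbb{F}_q)$; it is a permutation automorphism of $\mathsf{CSS}(A,B)$ if it is one for both $A$ and $B$. Permuting physical qudits by $\tau$ is then an operator on the code; a logical identity acts as the identity on the codespace. *)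

theory Defs
  imports "HOL-Analysis.Analysis"
begin

text \<open>Finite field F_q = type 'a :: {field, finite}; q = CARD('a), p = CHAR('a).
  Qudits are indexed by the finite type 'n (n = CARD('n)).
  States of n qudits: functions from the computational basis 'a^'n to complex.\<close>

type_synonym ('a, 'n) qstate = "'a ^ 'n \<Rightarrow> complex"

definition field_deg :: "'a::{field,finite} itself \<Rightarrow> nat" where
  "field_deg T = (THE m. CARD('a) = CHAR('a) ^ m)"

definition field_trace :: "'a::{field,finite} \<Rightarrow> 'a" where
  "field_trace x = (\<Sum>i < field_deg TYPE('a). x ^ (CHAR('a) ^ i))"

text \<open>Canonical additive character: omega^(tr x), omega = exp(2 pi i / p).\<close>
definition add_char :: "'a::{field,finite} \<Rightarrow> complex" where
  "add_char x = cis (2 * pi * real (THE k. k < CHAR('a) \<and> of_nat k = field_trace x) / real CHAR('a))"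

definition dotp :: "'a::{field,finite} ^ 'n \<Rightarrow> 'a ^ 'n \<Rightarrow> 'a" where
  "dotp u v = (\<Sum>i\<in>UNIV. u $ i * v $ i)"

text \<open>Generalized Pauli operators: X^v |x> = |x + v>,  Z^w |x> = omega^(tr(w.x)) |x>.\<close>
definition Xop :: "'a::{field,finite} ^ 'n \<Rightarrow> ('a, 'n) qstate \<Rightarrow> ('a, 'n) qstate" where
  "Xop v \<psi> = (\<lambda>y. \<psi> (y - v))"

definition Zop :: "'a::{field,finite} ^ 'n \<Rightarrow> ('a, 'n) qstate \<Rightarrow> ('a, 'n) qstate" where
  "Zop w \<psi> = (\<lambda>x. add_char (dotp w x) * \<psi> x)"

definition pauli :: "'a::{field,finite} ^ 'n \<Rightarrow> 'a ^ 'n \<Rightarrow> ('a, 'n) qstate \<Rightarrow> ('a, 'n) qstate" where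
  "pauli a b = Xop a \<circ> Zop b"

definition rowspace :: "'a::{field,finite} ^ 'n ^ 'r \<Rightarrow> ('a ^ 'n) set" where
  "rowspace H = {c v* H | c. True}"

definition full_row_rank :: "'a::{field,finite} ^ 'n ^ 'r \<Rightarrow> bool" where
  "full_row_rank H \<longleftrightarrow> (\<forall>c. c v* H = 0 \<longrightarrow> c = 0)"

definition css_valid :: "'a::{field,finite} ^ 'n ^ 'ra \<Rightarrow> 'a ^ 'n ^ 'rb \<Rightarrow> bool" where
  "css_valid HA HB \<longleftrightarrow> full_row_rank HA \<and> full_row_rank HB \<and> HA ** transpose HB = 0"

definition css_codespace :: "'a::{field,finite} ^ 'n ^ 'ra \<Rightarrow> 'a ^ 'n ^ 'rb \<Rightarrow> ('a, 'n) qstate set" where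
  "css_codespace HA HB = {\<psi>. (\<forall>v \<in> rowspace HA. Xop v \<psi> = \<psi>) \<and> (\<forall>w \<in> rowspace HB. Zop w \<psi> = \<psi>)}"

definition sympl_weight :: "'a::{field,finite} ^ 'n \<Rightarrow> 'a ^ 'n \<Rightarrow> nat" where
  "sympl_weight a b = card {i. a $ i \<noteq> 0 \<or> b $ i \<noteq> 0}"

definition css_normalizes :: "'a::{field,finite} ^ 'n ^ 'ra \<Rightarrow> 'a ^ 'n ^ 'rb \<Rightarrow> 'a ^ 'n \<Rightarrow> 'a ^ 'n \<Rightarrow> bool" where
  "css_normalizes HA HB a b \<longleftrightarrow>
     (\<forall>v \<in> rowspace HA. Xop v \<circ> pauli a b = pauli a b \<circ> Xop v) \<and>
     (\<forall>w \<in> rowspace HB. Zop w \<circ> pauli a b = pauli a b \<circ> Zop w)"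

definition css_in_stabilizer :: "'a::{field,finite} ^ 'n ^ 'ra \<Rightarrow> 'a ^ 'n ^ 'rb \<Rightarrow> 'a ^ 'n \<Rightarrow> 'a ^ 'n \<Rightarrow> bool" where
  "css_in_stabilizer HA HB a b \<longleftrightarrow> a \<in> rowspace HA \<and> b \<in> rowspace HB"

definition css_distance_ge :: "'a::{field,finite} ^ 'n ^ 'ra \<Rightarrow> 'a ^ 'n ^ 'rb \<Rightarrow> nat \<Rightarrow> bool" where
  "css_distance_ge HA HB d \<longleftrightarrow>
     (\<forall>a b. css_normalizes HA HB a b \<and> sympl_weight a b < d \<longrightarrow> css_in_stabilizer HA HB a b)"

definition perm_matrix :: "('n::finite \<Rightarrow> 'n) \<Rightarrow> 'a::{field,finite} ^ 'n ^ 'n" where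
  "perm_matrix \<tau> = (\<chi> i j. if \<tau> i = j then 1 else 0)"

definition perm_aut_classical :: "('n::finite \<Rightarrow> 'n) \<Rightarrow> 'a::{field,finite} ^ 'n ^ 'r \<Rightarrow> bool" where
  "perm_aut_classical \<tau> H \<longleftrightarrow> \<tau> permutes UNIV \<and>
     (\<exists>U :: 'a ^ 'r ^ 'r. invertible U \<and> U ** H = H ** perm_matrix \<tau>)"

definition perm_aut_css :: "('n::finite \<Rightarrow> 'n) \<Rightarrow> 'a::{field,finite} ^ 'n ^ 'ra \<Rightarrow> 'a ^ 'n ^ 'rb \<Rightarrow> bool" where
  "perm_aut_css \<tau> HA HB \<longleftrightarrow> perm_aut_classical \<tau> HA \<and> perm_aut_classical \<tau> HB"

text \<open>Physical qudit permutation: the content of qudit i is moved to position tau i.\<close>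
definition qudit_perm_op :: "('n::finite \<Rightarrow> 'n) \<Rightarrow> ('a, 'n) qstate \<Rightarrow> ('a, 'n) qstate" where
  "qudit_perm_op \<tau> \<psi> = (\<lambda>y. \<psi> (\<chi> i. y $ (\<tau> i)))"

definition logical_identity :: "(('a, 'n) qstate \<Rightarrow> ('a, 'n) qstate) \<Rightarrow> ('a, 'n) qstate set \<Rightarrow> bool" where
  "logical_identity U C \<longleftrightarrow> (\<forall>\<psi> \<in> C. U \<psi> = \<psi>)"

end

theory Submission
  imports Defs "HOL-Computational_Algebra.Polynomial" "HOL-Computational_Algebra.Primes"
    "HOL-Algebra.Sylow" "HOL-Algebra.Multiplicative_Group" "HOL-Number_Theory.Cong"
begin


lemma ff_CHAR_prime: "prime CHAR('a::{field,finite})"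
  by (rule prime_CHAR_semidom) (rule finite_imp_CHAR_pos, simp)

lemma ff_no_other_prime:
  fixes r :: nat
  assumes r: "prime r" "r dvd CARD('a::{field,finite})"
  shows "r = CHAR('a)"
proof (rule ccontr)
  assume ne: "r \<noteq> CHAR('a)"
  define G where "G = \<lparr> carrier = (UNIV :: 'a set), monoid.mult = (+), one = (0 :: 'a) \<rparr>"
  have grp: "group G"
  proof (rule groupI)
    fix x assume x: "x \<in> carrier G"
    show "\<exists>y\<in>carrier G. y \<otimes>\<^bsub>G\<^esub> x = \<one>\<^bsub>G\<^esub>"
      by (intro bexI[of _ "-x"]) (auto simp: G_def)
  qed (auto simp: G_def add_ac)
  obtain k where k: "CARD('a) = r * k" using r(2) by blast
  have "order G = r ^ 1 * k" using k by (simp add: order_def G_def)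
  then obtain H where H: "subgroup H G" "card H = r ^ 1"
    using sylow_thm[OF r(1) grp, of 1 k] by (auto simp: G_def)
  interpret Hg: group "G\<lparr>carrier := H\<rparr>" using group.subgroup_imp_group[OF grp H(1)] .
  have pw: "x [^]\<^bsub>G\<lparr>carrier := H\<rparr>\<^esub> (n::nat) = of_nat n * x" for x :: 'a and n
    by (induction n) (auto simp: G_def distrib_right)
  have nz: "(of_nat r :: 'a) \<noteq> 0"
  proof
    assume "(of_nat r :: 'a) = 0"
    hence "CHAR('a) dvd r" by (simp add: of_nat_eq_0_iff_char_dvd)
    with r(1) ff_CHAR_prime[where 'a='a] ne show False
      by (metis prime_nat_iff prime_gt_1_nat less_irrefl)
  qed
  have "H \<subseteq> {0}"
  proof
    fix x assume x: "x \<in> H"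
    have "x [^]\<^bsub>G\<lparr>carrier := H\<rparr>\<^esub> order (G\<lparr>carrier := H\<rparr>) = \<one>\<^bsub>G\<lparr>carrier := H\<rparr>\<^esub>"
      by (rule Hg.pow_order_eq_1) (use x in simp)
    hence "of_nat r * x = 0" using H(2) by (simp add: pw order_def, simp add: G_def)
    with nz show "x \<in> {0}" by simp
  qed
  hence "card H \<le> card {0::'a}" by (intro card_mono) auto
  hence "card H \<le> 1" by simp
  with H(2) prime_gt_1_nat[OF r(1)] show False by simp
qed

lemma ff_card_prime_power: "\<exists>m. CARD('a::{field,finite}) = CHAR('a) ^ m"
proof -
  let ?p = "CHAR('a)" and ?q = "CARD('a)"
  obtain y where y: "?q = ?p ^ multiplicity ?p ?q * y" "\<not> ?p dvd y"
  proof (rule multiplicity_decompose'[where x="?q" and p="?p"])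
    fix y assume "?q = ?p ^ multiplicity ?p ?q * y" "\<not> ?p dvd y"
    thus thesis by (rule that)
  next
    show "?q \<noteq> 0" by simp
  next
    show "\<not> is_unit ?p" using ff_CHAR_prime[where 'a='a] not_prime_unit by blast
  qed
  have "y = 1"
  proof (rule ccontr)
    assume "y \<noteq> 1"
    moreover have "y \<noteq> 0" using y(2) by (metis dvd_0_right)
    ultimately obtain r where r: "prime r" "r dvd y" using prime_factor_nat by blast
    have "r dvd ?q" using r(2) y(1) by (metis dvd_mult)
    hence "r = ?p" by (rule ff_no_other_prime[OF r(1)])
    with r(2) y(2) show False by simp
  qed
  hence "?q = ?p ^ multiplicity ?p ?q" using y(1) by simp
  thus ?thesis by blast
qed



lemma ff_field_deg: "CARD('a::{field,finite}) = CHAR('a) ^ field_deg TYPE('a)"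
proof -
  obtain m where m: "CARD('a) = CHAR('a) ^ m" using ff_card_prime_power by blast
  have gt: "1 < CHAR('a)" using prime_gt_1_nat[OF ff_CHAR_prime[where 'a='a]] .
  have "field_deg TYPE('a) = m" unfolding field_deg_def
  proof (rule the_equality)
    show "CARD('a) = CHAR('a) ^ m" by (rule m)
  next
    fix m' assume "CARD('a) = CHAR('a) ^ m'"
    with m have "CHAR('a) ^ m' = CHAR('a) ^ m" by simp
    thus "m' = m" using power_inject_exp[OF gt] by blast
  qed
  with m show ?thesis by simp
qed

lemma ff_deg_pos: "field_deg TYPE('a::{field,finite}) > 0"
proof (rule ccontr)
  assume "\<not> field_deg TYPE('a) > 0"
  hence "CARD('a) = 1" using ff_field_deg[where 'a='a] by simp
  moreover have "{0::'a, 1} \<subseteq> UNIV" by simp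
  hence "card {0::'a, 1} \<le> CARD('a)" by (intro card_mono) auto
  ultimately show False by simp
qed

lemma ff_pow_card: "(x::'a::{field,finite}) ^ CARD('a) = x"
proof (cases "x = 0")
  case False
  have "x * (\<Prod>y\<in>UNIV-{0}. x * y) = x * x ^ (card (UNIV :: 'a set) - 1) * \<Prod>(UNIV-{0})"
    by (simp add: prod.distrib mult_ac)
  also have "x * x ^ (card (UNIV :: 'a set) - 1) = x ^ Suc (card (UNIV :: 'a set) - 1)"
    by (subst power_Suc) auto
  also have "Suc (card (UNIV :: 'a set) - 1) = card (UNIV :: 'a set)"
    using finite_UNIV_card_ge_0[where ?'a = 'a] by simp
  also have "(\<Prod>y\<in>UNIV-{0}. x * y) = (\<Prod>y\<in>UNIV-{0}. y)"
    by (rule prod.reindex_bij_witness[of _ "\<lambda>y. y / x" "\<lambda>y. x * y"]) (use False in auto)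
  finally show ?thesis
    by simp
qed (use finite_UNIV_card_ge_0[where ?'a = 'a] in auto)

lemma trace_frob: "field_trace (x::'a::{field,finite}) ^ CHAR('a) = field_trace x"
proof -
  let ?p = "CHAR('a)" and ?m = "field_deg TYPE('a)"
  obtain k where k: "?m = Suc k" using ff_deg_pos[where 'a='a] gr0_implies_Suc by blast
  have "field_trace x ^ ?p = (\<Sum>i<?m. (x ^ (?p ^ i)) ^ ?p)"
    unfolding field_trace_def by (rule freshmans_dream_sum[OF ff_CHAR_prime refl])
  also have "\<dots> = (\<Sum>i<?m. x ^ (?p ^ Suc i))"
    by (simp add: power_mult[symmetric] mult.commute)
  also have "\<dots> = (\<Sum>i<k. x ^ (?p ^ Suc i)) + x ^ (?p ^ Suc k)"
    by (simp add: k)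
  also have "x ^ (?p ^ Suc k) = x" using ff_pow_card[of x] ff_field_deg[where 'a='a] k by simp
  also have "(\<Sum>i<k. x ^ (?p ^ Suc i)) + x = (\<Sum>i<Suc k. x ^ (?p ^ i))"
    by (simp only: sum.lessThan_Suc_shift power_0 power_one_right add.commute)
  finally show ?thesis by (simp add: field_trace_def k)
qed

lemma of_nat_frob: "(of_nat k :: 'a::{field,finite}) ^ CHAR('a) = of_nat k"
proof (induction k)
  case 0 thus ?case by (simp add: prime_gt_0_nat[OF ff_CHAR_prime[where 'a='a]])
next
  case (Suc k)
  have "(of_nat (Suc k) :: 'a) ^ CHAR('a) = (of_nat k + 1) ^ CHAR('a)" by (simp add: add.commute)
  also have "\<dots> = of_nat k ^ CHAR('a) + 1 ^ CHAR('a)"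
    by (rule freshmans_dream[OF ff_CHAR_prime refl])
  finally show ?case using Suc by simp
qed

lemma frob_fixed:
  assumes "(y::'a::{field,finite}) ^ CHAR('a) = y"
  shows "\<exists>k<CHAR('a). y = of_nat k"
proof -
  let ?p = "CHAR('a)"
  have gt: "1 < ?p" using prime_gt_1_nat[OF ff_CHAR_prime[where 'a='a]] .
  define P :: "'a poly" where "P = Polynomial.monom 1 ?p - [:0, 1:]"
  have c01: "Polynomial.coeff [:0, 1::'a:] ?p = 0" by (intro coeff_eq_0) (use gt in simp)
  have coeffP: "Polynomial.coeff P ?p = 1" using c01 by (simp add: P_def)
  hence P0: "P \<noteq> 0" by auto
  have degP: "degree P \<le> ?p" unfolding P_def
    by (rule order.trans[OF degree_diff_le_max]) (use gt in \<open>auto simp: degree_monom_le\<close>)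
  have polyP: "poly P z = z ^ ?p - z" for z by (simp add: P_def poly_monom)
  define S where "S = (of_nat ` {..<?p} :: 'a set)"
  have cardS: "card S = ?p" unfolding S_def
    by (subst card_image) (auto intro!: inj_onI simp: of_nat_eq_iff_cong_CHAR cong_def)
  have sub: "S \<subseteq> {z. poly P z = 0}" by (auto simp: S_def polyP of_nat_frob)
  have "card {z. poly P z = 0} \<le> card S"
    using card_poly_roots_bound[OF P0] degP cardS by simp
  hence "S = {z. poly P z = 0}" by (intro card_seteq sub) auto
  moreover have "y \<in> {z. poly P z = 0}" using assms by (simp add: polyP)
  ultimately show ?thesis by (auto simp: S_def)
qed

lemma trace_nonzero: "\<exists>s::'a::{field,finite}. field_trace s \<noteq> 0"
proof (rule ccontr)
  assume "\<not> ?thesis"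
  hence all0: "field_trace s = 0" for s :: 'a by blast
  let ?p = "CHAR('a)" and ?m = "field_deg TYPE('a)"
  have gt: "1 < ?p" using prime_gt_1_nat[OF ff_CHAR_prime[where 'a='a]] .
  obtain k where k: "?m = Suc k" using ff_deg_pos[where 'a='a] gr0_implies_Suc by blast
  define T :: "'a poly" where "T = (\<Sum>i<?m. Polynomial.monom 1 (?p ^ i))"
  have polyT: "poly T z = field_trace z" for z
    by (simp add: T_def poly_sum poly_monom field_trace_def)
  have inj: "?p ^ i = ?p ^ k \<longleftrightarrow> i = k" for i using power_inject_exp[OF gt] by blast
  have "Polynomial.coeff T (?p ^ k) = (\<Sum>i<?m. if i = k then 1 else 0)"
    unfolding T_def coeff_sum by (intro sum.cong refl) (simp add: coeff_monom inj)
  also have "\<dots> = 1" by (simp add: k)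
  finally have T0: "T \<noteq> 0" by auto
  have degT: "degree T \<le> ?p ^ k" unfolding T_def
  proof (rule degree_sum_le)
    fix i assume "i \<in> {..<?m}"
    hence "i \<le> k" using k by simp
    hence "?p ^ i \<le> ?p ^ k" using gt by (simp add: power_increasing)
    thus "degree (Polynomial.monom (1::'a) (?p ^ i)) \<le> ?p ^ k" using degree_monom_le order.trans by blast
  qed simp
  have "UNIV = {z::'a. poly T z = 0}" using all0 polyT by auto
  hence "CARD('a) \<le> degree T" using card_poly_roots_bound[OF T0] by simp
  also have "\<dots> \<le> ?p ^ k" by (rule degT)
  also have "\<dots> < ?p ^ Suc k" using gt by simp
  finally show False using ff_field_deg[where 'a='a] k by simp
qed

lemma add_char_nontrivial: "\<exists>s::'a::{field,finite}. add_char s \<noteq> 1"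
proof -
  let ?p = "CHAR('a)"
  have gt: "1 < ?p" using prime_gt_1_nat[OF ff_CHAR_prime[where 'a='a]] .
  obtain s :: 'a where s: "field_trace s \<noteq> 0" using trace_nonzero by blast
  obtain k where k: "k < ?p" "field_trace s = of_nat k" using frob_fixed[OF trace_frob] by blast
  have k0: "k \<noteq> 0"
  proof
    assume "k = 0"
    with s k(2) show False by simp
  qed
  have the: "(THE k'. k' < ?p \<and> of_nat k' = field_trace s) = k"
  proof (rule the_equality)
    show "k < ?p \<and> of_nat k = field_trace s" using k by simp
  next
    fix k' assume "k' < ?p \<and> of_nat k' = field_trace s"
    hence "k' < ?p" "(of_nat k' :: 'a) = of_nat k" using k by auto
    thus "k' = k" using k(1) by (auto simp: of_nat_eq_iff_cong_CHAR cong_def)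
  qed
  have "add_char s \<noteq> 1"
  proof
    assume "add_char s = 1"
    hence "cis (2 * pi * real k / real ?p) = 1" by (simp add: add_char_def the)
    hence "cos (2 * pi * real k / real ?p) = 1" by (metis cis.simps(1) one_complex.simps(1))
    then obtain n :: int where n: "2 * pi * real k / real ?p = real_of_int n * 2 * pi"
      using cos_one_2pi_int by blast
    hence "(2 * pi) * (real k / real ?p) = (2 * pi) * real_of_int n" by (simp add: mult_ac)
    moreover have "(2 * pi :: real) \<noteq> 0" by simp
    ultimately have "real k / real ?p = real_of_int n" using mult_left_cancel by blast
    moreover have "0 < real k / real ?p" "real k / real ?p < 1" using k0 k(1) gt by auto
    ultimately have "0 < n" "n < 1" by auto
    thus False by simp
  qed
  thus ?thesis by blast
qed

theorem corollary3:
  fixes HA :: "'a::{field,finite} ^ 'n::finite ^ 'ra::finite"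
    and HB :: "'a ^ 'n ^ 'rb::finite"
    and \<tau> :: "'n \<Rightarrow> 'n"
  assumes "css_valid HA HB"
    and "css_distance_ge HA HB 3"
    and "perm_aut_css \<tau> HA HB"
    and "HA ** perm_matrix \<tau> = HA"
  shows "logical_identity (qudit_perm_op \<tau>) (css_codespace HA HB)"
proof -
  from assms(3) have perm: "\<tau> permutes UNIV"
    by (simp add: perm_aut_css_def perm_aut_classical_def)
  have inj: "inj \<tau>" using permutes_inj[OF perm] .
  have rowinv: "HA $ r $ (\<tau> i) = HA $ r $ i" for r i
  proof -
    have "(HA ** perm_matrix \<tau>) $ r $ (\<tau> i) = (\<Sum>k\<in>UNIV. if k = i then HA $ r $ k else 0)"
      by (simp add: matrix_matrix_mult_def perm_matrix_def inj_eq[OF inj] if_distrib[of "(*) _"] cong: if_cong)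
    also have "\<dots> = HA $ r $ i" by simp
    finally show ?thesis using assms(4) by simp
  qed
  have vinv: "v $ (\<tau> i) = v $ i" if "v \<in> rowspace HA" for v i
    using that by (auto simp: rowspace_def vector_matrix_mult_def rowinv)
  have key: "y $ (\<tau> i) = y $ i" if psi: "\<psi> \<in> css_codespace HA HB" and nz: "\<psi> y \<noteq> 0" for \<psi> y i
  proof (rule ccontr)
    assume ne: "y $ (\<tau> i) \<noteq> y $ i"
    hence ti: "\<tau> i \<noteq> i" by auto
    obtain s :: 'a where s: "add_char s \<noteq> 1" using add_char_nontrivial by blast
    define c where "c = s / (y $ i - y $ (\<tau> i))"
    define b :: "'a ^ 'n" where "b = (\<chi> j. (if j = i then c else 0) - (if j = \<tau> i then c else 0))"
    have dot: "dotp b z = c * (z $ i - z $ (\<tau> i))" for z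
    proof -
      have "dotp b z = (\<Sum>j\<in>UNIV. (if j = i then c * z $ j else 0)) - (\<Sum>j\<in>UNIV. (if j = \<tau> i then c * z $ j else 0))"
        unfolding dotp_def b_def by (simp add: left_diff_distrib sum_subtractf if_distrib[of "\<lambda>u. u * _"] cong: if_cong)
      also have "\<dots> = c * (z $ i - z $ (\<tau> i))" by (simp add: right_diff_distrib)
      finally show ?thesis .
    qed
    have "css_normalizes HA HB 0 b"
      unfolding css_normalizes_def pauli_def
    proof (intro conjI ballI)
      fix v assume v: "v \<in> rowspace HA"
      show "Xop v \<circ> (Xop 0 \<circ> Zop b) = Xop 0 \<circ> Zop b \<circ> Xop v"
        by (intro ext) (simp add: Xop_def Zop_def dot vinv[OF v])
    next
      fix w assume w: "w \<in> rowspace HB"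
      show "Zop w \<circ> (Xop 0 \<circ> Zop b) = Xop 0 \<circ> Zop b \<circ> Zop w"
        by (intro ext) (simp add: Xop_def Zop_def mult_ac)
    qed
    moreover have "sympl_weight 0 b < 3"
    proof -
      have "{j. (0::'a^'n) $ j \<noteq> 0 \<or> b $ j \<noteq> 0} \<subseteq> {i, \<tau> i}"
        by (auto simp: b_def)
      hence "sympl_weight 0 b \<le> card {i, \<tau> i}" unfolding sympl_weight_def
        by (intro card_mono) auto
      also have "\<dots> \<le> 2" by (simp add: card_insert_le_m1)
      finally show ?thesis by simp
    qed
    ultimately have "b \<in> rowspace HB"
      using assms(2) by (simp add: css_distance_ge_def css_in_stabilizer_def)
    hence "Zop b \<psi> = \<psi>" using psi by (simp add: css_codespace_def)
    hence "add_char (dotp b y) * \<psi> y = \<psi> y" by (metis Zop_def)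
    hence "add_char (dotp b y) = 1" using nz by simp
    moreover have "dotp b y = s" using ne by (simp add: dot c_def)
    ultimately show False using s by simp
  qed
  show ?thesis unfolding logical_identity_def qudit_perm_op_def
  proof (intro ballI ext)
    fix \<psi> and y :: "'a ^ 'n" assume psi: "\<psi> \<in> css_codespace HA HB"
    show "\<psi> (\<chi> i. y $ (\<tau> i)) = \<psi> y"
    proof (cases "\<psi> y = 0")
      case False
      then have "(\<chi> i. y $ (\<tau> i)) = y" by (simp add: vec_eq_iff key[OF psi])
      thus ?thesis by simp
    next
      case True
      show ?thesis
      proof (rule ccontr)
        define z where "z = (\<chi> i. y $ (\<tau> i))"
        assume "\<psi> (\<chi> i. y $ (\<tau> i)) \<noteq> \<psi> y"
        hence "\<psi> z \<noteq> 0" using True by (simp add: z_def)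
        hence zz: "z $ (\<tau> i) = z $ i" for i using key[OF psi] by blast
        have "z = y"
        proof (subst vec_eq_iff, intro allI)
          fix j
          have "z $ (\<tau> (inv_into UNIV \<tau> j)) = z $ (inv_into UNIV \<tau> j)" by (rule zz)
          thus "z $ j = y $ j" by (simp add: z_def permutes_inverses(1)[OF perm])
        qed
        with True \<open>\<psi> z \<noteq> 0\<close> show False by simp
      qed
    qed
  qed
qed

end
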